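(* Let $n\ge1$ and $\varepsilon_0>0$. For Lebesgue-almost every $\boldsymbol\alpha\in[0,1]^n$, for all $C\ge1$, all $\eta>0$ and all $T\ge1$, $$S_2^*(\boldsymbol\alpha,T)\ll_{n,\boldsymbol\alpha,C,\eta,\varepsilon_0}(\log\log T)^{2+n+\eta}(\log T)^n.$$
   Context: $\|x\|$ is the distance to the nearest integer and $\log x$ means $\log\max\{x,e\}$. For fixed $\varepsilon_0>0$, $C\ge1$, $\boldsymbol\alpha\in[0,1]^n$, $T\ge1$, $$S_2^*(\boldsymbol\alpha,T):=\sum\frac{1}{q\|q\alpha_1\|\cdots\|q\alpha_n\|},$$ the sum being over integers $0<q\le T$ with $(\log T)^{-n-\varepsilon_0}<q\|q\alpha_1\|\cdots\|q\alpha_n\|\le(\log T)^{C}$. *)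

theory Defs
  imports "HOL-Analysis.Analysis"
begin

definition nint_dist :: "real \<Rightarrow> real" where
  "nint_dist x = \<bar>x - of_int (round x)\<bar>"

text \<open>The paper's convention: log x means log max{x, e}.\<close>
definition Lg :: "real \<Rightarrow> real" where
  "Lg x = ln (max x (exp 1))"

definition qprod :: "real^'n \<Rightarrow> nat \<Rightarrow> real" where
  "qprod \<alpha> q = real q * (\<Prod>i\<in>UNIV. nint_dist (real q * \<alpha> $ i))"

definition S2star :: "real \<Rightarrow> real \<Rightarrow> real^'n \<Rightarrow> real \<Rightarrow> real" where
  "S2star eps0 C \<alpha> T =
     (\<Sum>q \<in> {q. 0 < q \<and> real q \<le> T \<and>
                 Lg T powr (- real CARD('n) - eps0) < qprod \<alpha> q \<and>
                 qprod \<alpha> q \<le> Lg T powr C}.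
        1 / qprod \<alpha> q)"

end

theory Submission
  imports Defs
begin

definition cover :: "nat \<Rightarrow> ('n::finite \<Rightarrow> real) \<Rightarrow> (real^'n) set" where
 "cover q r = (\<Union>a \<in> PiE UNIV (\<lambda>_. {0..int q}).
     cbox (\<chi> i. (of_int (a i) - r i)/real q) (\<chi> i. (of_int (a i) + r i)/real q))"

lemma nint_dist_nonneg: "0 \<le> nint_dist x" by (simp add: nint_dist_def)
lemma nint_dist_le: "nint_dist x \<le> 1/2"
  using of_int_round_abs_le[of x] by (simp add: nint_dist_def abs_minus_commute)

lemma cover_mem:
  fixes \<alpha> :: "real^'n::finite"
  assumes q: "q > 0" and cube: "\<forall>i. 0 \<le> \<alpha> $ i \<and> \<alpha> $ i \<le> 1"
    and r: "\<forall>i. nint_dist (real q * \<alpha> $ i) \<le> r i"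
  shows "\<alpha> \<in> cover q r"
proof -
  define a where "a = (\<lambda>i. round (real q * \<alpha> $ i))"
  have a_in: "a \<in> PiE UNIV (\<lambda>_. {0..int q})"
  proof -
    have "0 \<le> a i \<and> a i \<le> int q" for i
    proof -
      have h1: "0 \<le> real q * \<alpha> $ i" using cube by simp
      have h2: "real q * \<alpha> $ i \<le> real q" using cube q by (simp add: mult_left_le)
      have "round (0::real) \<le> a i" unfolding a_def by (rule round_mono[OF h1])
      moreover have "a i \<le> round (real q)" unfolding a_def by (rule round_mono[OF h2])
      ultimately show ?thesis by simp
    qed
    then show ?thesis by auto
  qed
  have "\<alpha> \<in> cbox (\<chi> i. (of_int (a i) - r i)/real q) (\<chi> i. (of_int (a i) + r i)/real q)"
  proof (unfold mem_box_cart, intro allI)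
    fix i
    have "\<bar>real q * \<alpha> $ i - of_int (a i)\<bar> \<le> r i"
      using r unfolding a_def nint_dist_def by auto
    then show "(\<chi> i. (of_int (a i) - r i)/real q) $ i \<le> \<alpha> $ i \<and> \<alpha> $ i \<le> (\<chi> i. (of_int (a i) + r i)/real q) $ i"
      using q by (auto simp: field_simps abs_le_iff)
  qed
  then show ?thesis unfolding cover_def using a_in by blast
qed

lemma cover_sets: "cover q r \<in> sets lborel"
  unfolding cover_def
  by (intro sets.finite_UN) (auto intro!: finite_PiE)

lemma cover_measure:
  fixes r :: "'n::finite \<Rightarrow> real"
  assumes q: "q > 0" and r: "\<forall>i. 0 \<le> r i"
  shows "emeasure lborel (cover q r) \<le> ennreal ((real q + 1)^CARD('n) * (\<Prod>i\<in>UNIV. 2 * r i / real q))"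
proof -
  let ?A = "PiE UNIV (\<lambda>_::'n. {0..int q})"
  let ?B = "\<lambda>a. cbox (\<chi> i. (of_int (a i) - r i)/real q) (\<chi> i. (of_int (a i) + r i)/real q) :: (real^'n) set"
  have fin: "finite ?A" by (intro finite_PiE) auto
  have "emeasure lborel (cover q r) \<le> (\<Sum>a\<in>?A. emeasure lborel (?B a))"
    unfolding cover_def by (rule emeasure_subadditive_finite[OF fin]) auto
  also have "\<dots> = (\<Sum>a\<in>?A. ennreal (\<Prod>i\<in>UNIV. 2 * r i / real q))"
  proof (rule sum.cong[OF refl])
    fix a
    have ne: "?B a \<noteq> {}" using r q
      by (auto simp: box_ne_empty(1) Basis_vec_def inner_axis cart_eq_inner_axis[symmetric] divide_right_mono)
    have "emeasure lborel (?B a) = ennreal (measure lborel (?B a))"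
      using emeasure_lborel_cbox_finite by (intro emeasure_eq_ennreal_measure) (simp add: less_top)
    also have "measure lborel (?B a) = (\<Prod>i\<in>UNIV. 2 * r i / real q)"
      by (subst content_cbox_cart[OF ne]) (auto intro!: prod.cong simp: diff_divide_distrib[symmetric])
    finally show "emeasure lborel (?B a) = ennreal (\<Prod>i\<in>UNIV. 2 * r i / real q)" .
  qed
  also have "\<dots> = of_nat (card ?A) * ennreal (\<Prod>i\<in>UNIV. 2 * r i / real q)" by simp
  also have "card ?A = (q+1)^CARD('n)" by (simp add: card_PiE nat_add_distrib)
  also have "of_nat ((q+1)^CARD('n)) * ennreal (\<Prod>i\<in>UNIV. 2 * r i / real q)
      = ennreal ((real q + 1)^CARD('n) * (\<Prod>i\<in>UNIV. 2 * r i / real q))"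
    using r by (simp add: ennreal_mult' prod_nonneg ennreal_of_nat_eq_real_of_nat add.commute)
  finally show ?thesis by simp
qed


lemma dyadic_exists:
  fixes u :: real assumes "0 < u" "u \<le> 1"
  shows "\<exists>k::nat. (1/2)^(Suc k) < u \<and> u \<le> (1/2)^k"
proof -
  have ex: "\<exists>m::nat. (1/2)^m < u" using real_arch_pow_inv[OF assms(1), of "1/2"] by auto
  define m where "m = (LEAST m::nat. (1/2)^m < u)"
  have m1: "(1/2::real)^m < u" unfolding m_def by (rule LeastI_ex[OF ex])
  have m0: "m \<noteq> 0" using m1 assms(2) by (intro notI) simp
  then obtain k where mk: "m = Suc k" by (cases m) auto
  have "\<not> (1/2::real)^k < u" using not_less_Least[of k "\<lambda>m. (1/2::real)^m < u"] mk unfolding m_def by auto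
  then show ?thesis using m1 mk by (intro exI[of _ k]) auto
qed

definition Kset :: "nat \<Rightarrow> real \<Rightarrow> real \<Rightarrow> ('n::finite \<Rightarrow> nat) set" where
  "Kset q L U = {k. real q / U < 2^(sum k UNIV + CARD('n)) \<and> 2^(sum k UNIV) < real q / L}"

lemma Kset_finite:
  assumes "L > 0"
  shows "finite (Kset q L U :: ('n::finite \<Rightarrow> nat) set)"
proof -
  define B where "B = nat \<lceil>real q / L\<rceil>"
  have "Kset q L U \<subseteq> PiE UNIV (\<lambda>_::'n. {..B})"
  proof
    fix k :: "'n \<Rightarrow> nat" assume "k \<in> Kset q L U"
    then have h: "2^(sum k UNIV) < real q / L" by (simp add: Kset_def)
    have "real (sum k UNIV) < 2^(sum k UNIV)" by (rule of_nat_less_two_power)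
    then have "real (sum k UNIV) < real q / L" using h by linarith
    then have "sum k UNIV \<le> B" unfolding B_def by linarith
    moreover have "k i \<le> sum k UNIV" for i by (rule member_le_sum) auto
    ultimately show "k \<in> PiE UNIV (\<lambda>_::'n. {..B})" by (auto intro: le_trans)
  qed
  moreover have "finite (PiE UNIV (\<lambda>_::'n. {..B}))" by (intro finite_PiE) auto
  ultimately show ?thesis by (rule finite_subset)
qed

lemma pointwise:
  fixes \<alpha> :: "real^'n::finite"
  assumes q: "q > 0" and cube: "\<forall>i. 0 \<le> \<alpha> $ i \<and> \<alpha> $ i \<le> 1"
    and L: "0 < L" and xL: "L < qprod \<alpha> q" and xU: "qprod \<alpha> q \<le> U"
  shows "ennreal (1 / qprod \<alpha> q) \<le>
     (\<Sum>k\<in>Kset q L U. ennreal (2^(sum k UNIV + CARD('n)) / real q) * indicator (cover q (\<lambda>i. (1/2)^(k i))) \<alpha>)"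
proof -
  define u where "u = (\<lambda>i. nint_dist (real q * \<alpha> $ i))"
  define P where "P = (\<Prod>i\<in>UNIV. u i)"
  have x: "qprod \<alpha> q = real q * P" unfolding qprod_def P_def u_def by simp
  have u0: "0 \<le> u i" for i unfolding u_def by (rule nint_dist_nonneg)
  have u1: "u i \<le> 1" for i unfolding u_def using nint_dist_le[of "real q * \<alpha> $ i"] by linarith
  have Ppos: "P > 0" using x xL L q by (smt (verit) mult_nonneg_nonpos of_nat_0_le_iff)
  have upos: "u i > 0" for i
  proof -
    have "P \<noteq> 0" using Ppos by simp
    then have "u i \<noteq> 0" unfolding P_def by (metis UNIV_I finite prod_zero_iff)
    then show ?thesis using u0[of i] by linarith
  qed
  have "\<forall>i. \<exists>k::nat. (1/2)^(Suc k) < u i \<and> u i \<le> (1/2)^k"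
    using dyadic_exists upos u1 by blast
  then obtain k where k: "\<And>i. (1/2)^(Suc (k i)) < u i \<and> u i \<le> (1/2)^(k i)" by metis
  define s where "s = sum k UNIV"
  define n where "n = CARD('n)"
  have Pup: "P \<le> (1/2)^s"
  proof -
    have "P \<le> (\<Prod>i\<in>UNIV. (1/2::real)^(k i))" unfolding P_def
      by (intro prod_mono) (use u0 k in auto)
    also have "\<dots> = (1/2)^s" unfolding s_def by (simp add: power_sum)
    finally show ?thesis .
  qed
  have Plo: "(1/2)^(s+n) < P"
  proof -
    have "(\<Prod>i\<in>UNIV. (1/2::real)^(Suc (k i))) < P" unfolding P_def
    proof (rule prod_mono_strict[of undefined])
      show "(1/2)^(Suc (k undefined)) < u undefined" using k by blast
    next
      fix i show "0 \<le> (1/2::real)^(Suc (k i)) \<and> (1/2)^(Suc (k i)) \<le> u i"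
        using k[of i] by (simp del: power_Suc)
    next
      fix i show "0 < u i" by (rule upos)
    qed auto
    moreover have "(\<Prod>i\<in>UNIV. (1/2::real)^(Suc (k i))) = (1/2)^(\<Sum>i\<in>UNIV. Suc (k i))"
      by (simp only: power_sum)
    moreover have "(\<Sum>i\<in>UNIV. Suc (k i)) = s + n" unfolding s_def n_def using sum.distrib[of k "\<lambda>_. 1::nat" UNIV] by simp
    ultimately show ?thesis by simp
  qed
  have hpow: "(1/2::real)^m * 2^m = 1" for m by (simp add: power_mult_distrib[symmetric])
  have qpos: "real q > 0" using q by simp
  have c1: "1 / qprod \<alpha> q \<le> 2^(s+n) / real q"
  proof -
    have "real q * (1/2)^(s+n) \<le> real q * P" using Plo qpos by simp
    then have "1 / (real q * P) \<le> 1 / (real q * (1/2)^(s+n))"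
      using qpos Ppos by (intro divide_left_mono) (auto intro!: mult_pos_pos)
    also have "\<dots> = 2^(s+n) / real q" by (simp add: power_one_over field_simps)
    finally show ?thesis using x by simp
  qed
  have c2: "real q / U < 2^(s+n)"
  proof -
    have "real q * (1/2)^(s+n) < U" using Plo qpos xU x
      by (smt (verit) mult_strict_left_mono)
    moreover have "U > 0" using xU xL L by linarith
    ultimately show ?thesis using qpos by (simp add: power_one_over field_simps)
  qed
  have c3: "2^s < real q / L"
  proof -
    have "L < real q * (1/2)^s" using Pup qpos xL x
      by (smt (verit) mult_left_mono of_nat_0_le_iff)
    then show ?thesis using L by (simp add: power_one_over field_simps)
  qed
  have kin: "k \<in> Kset q L U" unfolding Kset_def using c2 c3 s_def n_def by simp
  have acov: "\<alpha> \<in> cover q (\<lambda>i. (1/2)^(k i))"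
    by (rule cover_mem[OF q cube]) (use k u_def in auto)
  have "ennreal (1 / qprod \<alpha> q) \<le> ennreal (2^(sum k UNIV + CARD('n)) / real q) * indicator (cover q (\<lambda>i. (1/2)^(k i))) \<alpha>"
    using c1 acov s_def n_def by (simp add: ennreal_leI)
  also have "\<dots> \<le> (\<Sum>k\<in>Kset q L U. ennreal (2^(sum k UNIV + CARD('n)) / real q) * indicator (cover q (\<lambda>i. (1/2)^(k i))) \<alpha>)"
    by (rule member_le_sum[OF kin]) (auto simp: Kset_finite[OF L])
  finally show ?thesis .
qed


lemma card_sum_eq:
  "card {k::'n::finite \<Rightarrow> nat. sum k UNIV = s} \<le> (s+1)^(CARD('n) - 1)"
proof -
  obtain i0 :: 'n where True by simp
  let ?S = "{k::'n \<Rightarrow> nat. sum k UNIV = s}"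
  let ?f = "\<lambda>k::'n\<Rightarrow>nat. restrict k (- {i0})"
  have inj: "inj_on ?f ?S"
  proof (rule inj_onI)
    fix k1 k2 assume k1: "k1 \<in> ?S" and k2: "k2 \<in> ?S" and eq: "?f k1 = ?f k2"
    have e: "k1 i = k2 i" if "i \<noteq> i0" for i using fun_cong[OF eq, of i] that by simp
    have "sum k1 (- {i0}) = sum k2 (- {i0})" by (rule sum.cong) (auto simp: e)
    moreover have "sum k1 UNIV = k1 i0 + sum k1 (- {i0})"
      by (metis Compl_eq_Diff_UNIV UNIV_I finite sum.remove)
    moreover have "sum k2 UNIV = k2 i0 + sum k2 (- {i0})"
      by (metis Compl_eq_Diff_UNIV UNIV_I finite sum.remove)
    ultimately have "k1 i0 = k2 i0" using k1 k2 by simp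
    then show "k1 = k2" using e by (metis ext)
  qed
  have sub: "?f ` ?S \<subseteq> PiE (- {i0}) (\<lambda>_. {0..s})"
  proof
    fix g assume "g \<in> ?f ` ?S"
    then obtain k where k: "k \<in> ?S" "g = ?f k" by auto
    have "k i \<le> s" for i using k(1) member_le_sum[of i UNIV k] by simp
    then show "g \<in> PiE (- {i0}) (\<lambda>_. {0..s})" using k(2) by auto
  qed
  have "card ?S = card (?f ` ?S)" by (rule card_image[OF inj, symmetric])
  also have "\<dots> \<le> card (PiE (- {i0}) (\<lambda>_::'n. {0..s}))"
    by (rule card_mono[OF _ sub]) (auto intro!: finite_PiE)
  also have "\<dots> = (s+1)^(CARD('n) - 1)"
  proof -
    have "card (- {i0}) = CARD('n) - 1" by (simp add: Compl_eq_Diff_UNIV card_Diff_singleton)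
    then show ?thesis by (simp add: card_PiE)
  qed
  finally show ?thesis .
qed

lemma card_nat_interval:
  fixes a b :: real assumes "a \<le> b"
  shows "finite {s::nat. a < real s \<and> real s < b} \<and> real (card {s::nat. a < real s \<and> real s < b}) \<le> b - a + 2"
proof -
  let ?S = "{s::nat. a < real s \<and> real s < b}"
  have sub: "?S \<subseteq> {nat \<lfloor>a\<rfloor> ..< nat \<lceil>b\<rceil>}"
  proof
    fix s assume "s \<in> ?S"
    then have "a < real s" "real s < b" by auto
    then show "s \<in> {nat \<lfloor>a\<rfloor> ..< nat \<lceil>b\<rceil>}" by (auto, linarith+)
  qed
  have "card ?S \<le> nat \<lceil>b\<rceil> - nat \<lfloor>a\<rfloor>" using card_mono[OF _ sub] by simp
  moreover have "real (nat \<lceil>b\<rceil> - nat \<lfloor>a\<rfloor>) \<le> b - a + 2"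
    using assms by (cases "a < 0"; cases "b < 0") (auto simp: of_nat_diff, linarith+)
  ultimately have "real (card ?S) \<le> b - a + 2"
    by (meson of_nat_le_iff order_trans)
  moreover have "finite ?S" by (rule finite_subset[OF sub]) simp
  ultimately show ?thesis by blast
qed


lemma card_Kset:
  assumes L: "0 < L" and LU: "L \<le> U" and q: "q > 0"
  shows "finite (Kset q L U :: ('n::finite\<Rightarrow>nat) set) \<and>
    real (card (Kset q L U :: ('n::finite\<Rightarrow>nat) set))
      \<le> (log 2 (U/L) + real CARD('n) + 2) * (max 0 (log 2 (real q/L)) + 1)^(CARD('n)-1)"
proof -
  define n where "n = CARD('n)"
  define b where "b = log 2 (real q/L)"
  define a where "a = log 2 (real q/U) - n"
  define Sq where "Sq = {s::nat. real q / U < 2^(s+n) \<and> 2^s < real q / L}"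
  have U: "U > 0" using L LU by linarith
  have qr: "real q > 0" using q by simp
  have "real q / U \<le> real q / L" using LU L qr by (intro divide_left_mono) auto
  then have "log 2 (real q / U) \<le> log 2 (real q / L)" using qr U by (intro log_mono) auto
  then have ab: "a \<le> b" unfolding a_def b_def by simp
  have sub: "Sq \<subseteq> {s::nat. a < real s \<and> real s < b}"
  proof
    fix s assume "s \<in> Sq"
    then have h1: "real q / U < 2^(s+n)" and h2: "2^s < real q / L" unfolding Sq_def by auto
    have "log 2 (real q / U) < log 2 (2^(s+n))"
      using h1 qr U by (subst log_less_cancel_iff) auto
    then have 1: "a < real s" unfolding a_def by simp
    have "log 2 (2^s) < log 2 (real q / L)"
      using h2 qr L by (subst log_less_cancel_iff) auto
    then have 2: "real s < b" unfolding b_def by simp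
    show "s \<in> {s::nat. a < real s \<and> real s < b}" using 1 2 by simp
  qed
  have ba: "b - a = log 2 (U/L) + n" unfolding a_def b_def using qr L U
    by (simp add: log_divide_pos)
  from card_nat_interval[OF ab] have fI: "finite {s::nat. a < real s \<and> real s < b}"
    and cI: "real (card {s::nat. a < real s \<and> real s < b}) \<le> b - a + 2" by auto
  have finSq: "finite Sq" by (rule finite_subset[OF sub fI])
  have cSq: "real (card Sq) \<le> log 2 (U/L) + n + 2"
    using card_mono[OF fI sub] cI ba by (smt (verit) of_nat_le_iff)
  have KU: "Kset q L U \<subseteq> (\<Union>s\<in>Sq. {k::'n\<Rightarrow>nat. sum k UNIV = s})"
    unfolding Kset_def Sq_def n_def by auto
  have finK: "finite (Kset q L U :: ('n\<Rightarrow>nat) set)" by (rule Kset_finite[OF L])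
  have "card (Kset q L U :: ('n\<Rightarrow>nat) set) \<le> card (\<Union>s\<in>Sq. {k::'n\<Rightarrow>nat. sum k UNIV = s})"
  proof (rule card_mono[OF _ KU])
    have "finite {k::'n\<Rightarrow>nat. sum k UNIV = s}" for s
    proof -
      have "{k::'n\<Rightarrow>nat. sum k UNIV = s} \<subseteq> PiE UNIV (\<lambda>_. {..s})"
      proof (intro subsetI PiE_I)
        fix k i assume "k \<in> {k::'n\<Rightarrow>nat. sum k UNIV = s}"
        then show "k i \<in> {..s}" using member_le_sum[of i UNIV k] by auto
      qed auto
      then show ?thesis by (rule finite_subset) (auto intro!: finite_PiE)
    qed
    then show "finite (\<Union>s\<in>Sq. {k::'n\<Rightarrow>nat. sum k UNIV = s})" using finSq by auto
  qed
  also have "\<dots> \<le> (\<Sum>s\<in>Sq. card {k::'n\<Rightarrow>nat. sum k UNIV = s})"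
    by (rule card_UN_le[OF finSq])
  finally have c0: "card (Kset q L U :: ('n\<Rightarrow>nat) set) \<le> (\<Sum>s\<in>Sq. card {k::'n\<Rightarrow>nat. sum k UNIV = s})" .
  have "real (card (Kset q L U :: ('n\<Rightarrow>nat) set)) \<le> real (\<Sum>s\<in>Sq. card {k::'n\<Rightarrow>nat. sum k UNIV = s})"
    by (rule of_nat_mono[OF c0])
  also have "\<dots> = (\<Sum>s\<in>Sq. real (card {k::'n\<Rightarrow>nat. sum k UNIV = s}))" by (rule of_nat_sum)
  also have "\<dots> \<le> (\<Sum>s\<in>Sq. (max 0 b + 1)^(n-1))"
  proof (rule sum_mono)
    fix s assume sS: "s \<in> Sq"
    have "real (card {k::'n\<Rightarrow>nat. sum k UNIV = s}) \<le> real ((s+1)^(n-1))"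
      unfolding n_def by (rule of_nat_mono[OF card_sum_eq])
    also have "\<dots> = (real s + 1)^(n-1)" by (simp add: add.commute)
    also have "\<dots> \<le> (max 0 b + 1)^(n-1)"
      using sub sS by (intro power_mono) auto
    finally show "real (card {k::'n\<Rightarrow>nat. sum k UNIV = s}) \<le> (max 0 b + 1)^(n-1)" .
  qed
  also have "\<dots> = real (card Sq) * (max 0 b + 1)^(n-1)" by simp
  also have "\<dots> \<le> (log 2 (U/L) + n + 2) * (max 0 b + 1)^(n-1)"
    by (rule mult_right_mono[OF cSq]) simp
  finally show ?thesis using finK unfolding b_def n_def by simp
qed


lemma Lg_ge1: "Lg T \<ge> 1"
proof -
  have "0 < max T (exp 1)" by (metis exp_gt_zero max.strict_coboundedI2)
  then have "ln (exp 1) \<le> ln (max T (exp 1))" by (subst ln_le_cancel_iff) auto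
  then show ?thesis unfolding Lg_def by simp
qed

lemma Lg_mono: "T \<le> T' \<Longrightarrow> Lg T \<le> Lg T'"
proof -
  assume "T \<le> T'"
  moreover have "0 < max T (exp 1)" "0 < max T' (exp 1)" by (metis exp_gt_zero max.strict_coboundedI2)+
  ultimately show ?thesis unfolding Lg_def by (subst ln_le_cancel_iff) auto
qed

definition Gf :: "nat \<Rightarrow> real \<Rightarrow> real \<Rightarrow> real \<Rightarrow> real^'n::finite \<Rightarrow> ennreal" where
  "Gf n eps0 C T \<alpha> = (\<Sum>q\<in>{1..nat \<lfloor>T\<rfloor>}. \<Sum>k\<in>Kset q (Lg T powr (- real n - eps0)) (Lg T powr C).
      ennreal (2^(sum k UNIV + n) / real q) * indicator (cover q (\<lambda>i. (1/2)^(k i))) \<alpha>)"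

lemma S_le_G:
  fixes \<alpha> :: "real^'n::finite"
  assumes cube: "\<forall>i. 0 \<le> \<alpha> $ i \<and> \<alpha> $ i \<le> 1"
  shows "ennreal (S2star eps0 C \<alpha> T) \<le> Gf CARD('n) eps0 C T \<alpha>"
proof -
  define L where "L = Lg T powr (- real CARD('n) - eps0)"
  define U where "U = Lg T powr C"
  define Q where "Q = {q. 0 < q \<and> real q \<le> T \<and> L < qprod \<alpha> q \<and> qprod \<alpha> q \<le> U}"
  define F where "F = (\<lambda>q. \<Sum>k\<in>(Kset q L U :: ('n \<Rightarrow> nat) set).
      ennreal (2^(sum k UNIV + CARD('n)) / real q) * indicator (cover q (\<lambda>i. (1/2)^(k i))) \<alpha>)"
  have L: "L > 0" unfolding L_def using Lg_ge1[of T] by simp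
  have QN: "Q \<subseteq> {1..nat \<lfloor>T\<rfloor>}" unfolding Q_def by (auto simp: le_nat_floor)
  have finQ: "finite Q" by (rule finite_subset[OF QN]) simp
  have S: "S2star eps0 C \<alpha> T = (\<Sum>q\<in>Q. 1 / qprod \<alpha> q)"
    unfolding S2star_def Q_def L_def U_def by simp
  have pos: "q \<in> Q \<Longrightarrow> 0 \<le> 1 / qprod \<alpha> q" for q unfolding Q_def using L by auto
  have "ennreal (S2star eps0 C \<alpha> T) = (\<Sum>q\<in>Q. ennreal (1 / qprod \<alpha> q))"
    unfolding S using pos by (subst sum_ennreal) auto
  also have "\<dots> \<le> (\<Sum>q\<in>Q. F q)"
  proof (rule sum_mono)
    fix q assume "q \<in> Q"
    then have "q > 0" "L < qprod \<alpha> q" "qprod \<alpha> q \<le> U" unfolding Q_def by auto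
    then show "ennreal (1 / qprod \<alpha> q) \<le> F q" unfolding F_def
      by (intro pointwise[OF _ cube L]) auto
  qed
  also have "\<dots> \<le> (\<Sum>q\<in>{1..nat \<lfloor>T\<rfloor>}. F q)"
    by (rule sum_mono2[OF _ QN]) auto
  also have "\<dots> = Gf CARD('n) eps0 C T \<alpha>" unfolding Gf_def F_def L_def U_def by simp
  finally show ?thesis .
qed

lemma G_meas[measurable]: "Gf CARD('n) eps0 C T \<in> borel_measurable (lborel :: (real^'n::finite) measure)"
  unfolding Gf_def using cover_sets by measurable

lemma term_bound:
  fixes k :: "'n::finite \<Rightarrow> nat"
  assumes q: "q > 0"
  shows "2^(sum k UNIV + CARD('n)) / real q * ((real q + 1)^CARD('n) * (\<Prod>i\<in>UNIV. 2 * (1/2)^(k i) / real q))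
     \<le> 8^CARD('n) / real q"
proof -
  define n where "n = CARD('n)"
  define s where "s = sum k UNIV"
  have qr: "real q > 0" using q by simp
  have "(\<Prod>i\<in>UNIV. 2 * (1/2::real)^(k i) / real q) = (\<Prod>i\<in>UNIV. (2 / real q) * (1/2)^(k i))"
    by (rule prod.cong) auto
  also have "\<dots> = (\<Prod>i\<in>(UNIV::'n set). (2 / real q)) * (\<Prod>i\<in>UNIV. (1/2::real)^(k i))"
    by (rule prod.distrib[of "\<lambda>_. 2 / real q" "\<lambda>i. (1/2::real)^(k i)"])
  also have "(\<Prod>i\<in>UNIV. (1/2::real)^(k i)) = (1/2)^s" unfolding s_def by (simp only: power_sum)
  also have "(\<Prod>i\<in>(UNIV::'n set). (2 / real q)) = (2 / real q)^n" unfolding n_def by simp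
  finally have P: "(\<Prod>i\<in>UNIV. 2 * (1/2::real)^(k i) / real q) = (2 / real q)^n * (1/2)^s" .
  have h1: "(2::real)^s * (1/2)^s = 1" by (simp add: power_mult_distrib[symmetric])
  have h2: "((real q + 1) / real q) ^ n \<le> 2^n"
    using qr by (intro power_mono) (auto simp: field_simps)
  have "2^(s + n) / real q * ((real q + 1)^n * ((2 / real q)^n * (1/2)^s))
      = (2^s * (1/2)^s) * 4^n * ((real q + 1) / real q)^n / real q"
    by (simp add: power_add power_divide field_simps power_mult_distrib[symmetric])
  also have "\<dots> = 4^n * ((real q + 1) / real q)^n / real q" using h1 by simp
  also have "\<dots> \<le> 4^n * 2^n / real q" using h2 qr by (intro divide_right_mono mult_left_mono) auto
  also have "\<dots> = 8^n / real q" by (simp add: power_mult_distrib[symmetric])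
  finally show ?thesis unfolding P n_def s_def by simp
qed


lemma G_int:
  assumes eps: "eps0 > 0" and C: "C \<ge> 0"
  shows "(\<integral>\<^sup>+ \<alpha>. Gf CARD('n) eps0 C T \<alpha> \<partial>(lborel :: (real^'n::finite) measure)) \<le>
    ennreal (\<Sum>q\<in>{1..nat \<lfloor>T\<rfloor>}. 8^CARD('n) / real q *
      ((log 2 (Lg T powr C / Lg T powr (- real CARD('n) - eps0)) + real CARD('n) + 2) *
       (max 0 (log 2 (real q / Lg T powr (- real CARD('n) - eps0))) + 1)^(CARD('n)-1)))"
proof -
  define n where "n = CARD('n)"
  define L where "L = Lg T powr (- real CARD('n) - eps0)"
  define U where "U = Lg T powr C"
  define B where "B = (\<lambda>q::nat. (log 2 (U / L) + real n + 2) * (max 0 (log 2 (real q / L)) + 1)^(n-1))"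
  have L: "L > 0" unfolding L_def using Lg_ge1[of T] by simp
  have L1: "L \<le> 1" unfolding L_def using powr_mono[of "- real CARD('n) - eps0" 0 "Lg T"] Lg_ge1[of T] eps
    by simp
  have U1: "1 \<le> U" unfolding U_def using Lg_ge1[of T] C by (intro ge_one_powr_ge_zero) auto
  have LU: "L \<le> U" using L1 U1 by linarith
  have Bnn: "0 \<le> B q" for q
  proof -
    have "1 \<le> U / L" using LU L by simp
    then have "0 \<le> log 2 (U / L)" by simp
    then show ?thesis unfolding B_def by (intro mult_nonneg_nonneg) auto
  qed
  let ?K = "\<lambda>q. (Kset q L U :: ('n \<Rightarrow> nat) set)"
  let ?c = "\<lambda>q (k::'n\<Rightarrow>nat). ennreal (2^(sum k UNIV + CARD('n)) / real q)"
  let ?C = "\<lambda>q (k::'n\<Rightarrow>nat). cover q (\<lambda>i. (1/2::real)^(k i)) :: (real^'n) set"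
  have "(\<integral>\<^sup>+ \<alpha>. Gf CARD('n) eps0 C T \<alpha> \<partial>(lborel :: (real^'n) measure)) =
      (\<Sum>q\<in>{1..nat \<lfloor>T\<rfloor>}. \<integral>\<^sup>+ \<alpha>. (\<Sum>k\<in>?K q. ?c q k * indicator (?C q k) \<alpha>) \<partial>lborel)"
  proof -
    have m: "(\<lambda>\<alpha>. \<Sum>k\<in>?K q. ?c q k * indicator (?C q k) \<alpha>) \<in> borel_measurable lborel" for q
      using cover_sets by measurable
    show ?thesis unfolding Gf_def L_def[symmetric] U_def[symmetric]
      by (subst nn_integral_sum) (use m in auto)
  qed
  also have "\<dots> = (\<Sum>q\<in>{1..nat \<lfloor>T\<rfloor>}. \<Sum>k\<in>?K q. ?c q k * emeasure lborel (?C q k))"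
  proof (rule sum.cong[OF refl])
    fix q
    have m2: "(\<lambda>\<alpha>. ?c q k * indicator (?C q k) \<alpha>) \<in> borel_measurable lborel" for k
      using cover_sets by measurable
    have "(\<integral>\<^sup>+ \<alpha>. (\<Sum>k\<in>?K q. ?c q k * indicator (?C q k) \<alpha>) \<partial>lborel)
       = (\<Sum>k\<in>?K q. \<integral>\<^sup>+ \<alpha>. ?c q k * indicator (?C q k) \<alpha> \<partial>lborel)"
      using m2 by (subst nn_integral_sum) auto
    also have "\<dots> = (\<Sum>k\<in>?K q. ?c q k * emeasure lborel (?C q k))"
      by (intro sum.cong refl nn_integral_cmult_indicator cover_sets)
    finally show "(\<integral>\<^sup>+ \<alpha>. (\<Sum>k\<in>?K q. ?c q k * indicator (?C q k) \<alpha>) \<partial>lborel)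
       = (\<Sum>k\<in>?K q. ?c q k * emeasure lborel (?C q k))" .
  qed
  also have "\<dots> \<le> (\<Sum>q\<in>{1..nat \<lfloor>T\<rfloor>}. \<Sum>k\<in>?K q. ennreal (8^n / real q))"
  proof (intro sum_mono)
    fix q k assume qin: "q \<in> {1..nat \<lfloor>T\<rfloor>}"
    then have q: "q > 0" by simp
    have "?c q k * emeasure lborel (?C q k) \<le> ?c q k *
        ennreal ((real q + 1)^CARD('n) * (\<Prod>i\<in>UNIV. 2 * (1/2) ^ (k i) / real q))"
      by (intro mult_left_mono cover_measure[OF q]) auto
    also have "\<dots> = ennreal (2^(sum k UNIV + CARD('n)) / real q *
        ((real q + 1)^CARD('n) * (\<Prod>i\<in>UNIV. 2 * (1/2) ^ (k i) / real q)))"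
      by (rule ennreal_mult'[symmetric]) simp
    also have "\<dots> \<le> ennreal (8^n / real q)"
      unfolding n_def by (intro ennreal_leI term_bound[OF q])
    finally show "?c q k * emeasure lborel (?C q k) \<le> ennreal (8^n / real q)" .
  qed
  also have "\<dots> \<le> (\<Sum>q\<in>{1..nat \<lfloor>T\<rfloor>}. ennreal (8^n / real q * B q))"
  proof (intro sum_mono)
    fix q assume qin: "q \<in> {1..nat \<lfloor>T\<rfloor>}"
    then have q: "q > 0" by simp
    from card_Kset[OF L LU q] have ck: "real (card (?K q)) \<le> B q"
      unfolding B_def n_def by blast
    have "(\<Sum>k\<in>?K q. ennreal (8^n / real q)) = of_nat (card (?K q)) * ennreal (8^n / real q)"
      by simp
    also have "\<dots> = ennreal (real (card (?K q)) * (8^n / real q))"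
      by (subst ennreal_of_nat_eq_real_of_nat, rule ennreal_mult'[symmetric]) simp
    also have "\<dots> \<le> ennreal (8^n / real q * B q)"
      using ck by (intro ennreal_leI) (simp add: divide_right_mono mult_right_mono mult.commute)
    finally show "(\<Sum>k\<in>?K q. ennreal (8^n / real q)) \<le> ennreal (8^n / real q * B q)" .
  qed
  also have "\<dots> = ennreal (\<Sum>q\<in>{1..nat \<lfloor>T\<rfloor>}. 8^n / real q * B q)"
    using Bnn by (intro sum_ennreal) auto
  finally show ?thesis unfolding B_def L_def U_def n_def .
qed


lemma harm_bound:
  assumes "N \<ge> 1"
  shows "(\<Sum>q\<in>{1..N}. 1 / real q) \<le> 1 + ln (real N)"
  using assms
proof (induction N rule: nat_induct_at_least)
  case base then show ?case by simp
next
  case (Suc N)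
  have N: "real N > 0" using Suc by simp
  have "ln (real N / (real N + 1)) \<le> real N / (real N + 1) - 1"
    using N by (intro ln_le_minus_one) simp
  also have "\<dots> = - 1 / (real N + 1)" using N by (simp add: field_simps)
  finally have h: "1 / (real N + 1) \<le> ln (real N + 1) - ln (real N)"
    using N by (simp add: ln_div)
  have "(\<Sum>q\<in>{1..Suc N}. 1 / real q) = (\<Sum>q\<in>{1..N}. 1 / real q) + 1 / (real N + 1)"
    by (simp add: add.commute)
  also have "\<dots> \<le> 1 + ln (real N) + 1 / (real N + 1)" using Suc.IH by simp
  also have "\<dots> \<le> 1 + ln (real (Suc N))" using h by (simp add: add.commute)
  finally show ?case .
qed

lemma div_ln2: "0 \<le> (Y::real) \<Longrightarrow> Y / ln 2 \<le> Y * (3/2)"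
proof -
  assume Y: "0 \<le> Y"
  have "Y * 1 \<le> Y * ((3/2) * ln 2)" using ln2_ge_two_thirds Y by (intro mult_left_mono) auto
  then have "Y \<le> Y * (3/2) * ln 2" by (simp add: mult.assoc)
  then show ?thesis by (subst pos_divide_le_eq) auto
qed

lemma Lg_Tk: "Lg (exp (exp (real k))) = exp (real k)"
proof -
  have "exp 1 \<le> exp (exp (real k))" by simp
  then show ?thesis unfolding Lg_def by (simp add: max_def)
qed

lemma real_bound:
  fixes n :: nat and eps0 C :: real
  assumes n: "n \<ge> 1" and eps: "eps0 > 0" and C: "C \<ge> 0" and k: "k \<ge> 1"
  defines "T \<equiv> exp (exp (real k))"
  defines "D \<equiv> 8^n * 2 * (2 * (C + n + eps0) + n + 2) * (3 + 2 * (n + eps0))^(n-1)"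
  shows "(\<Sum>q\<in>{1..nat \<lfloor>T\<rfloor>}. 8^n / real q *
      ((log 2 (Lg T powr C / Lg T powr (- real n - eps0)) + real n + 2) *
       (max 0 (log 2 (real q / Lg T powr (- real n - eps0))) + 1)^(n-1)))
     \<le> D * real k * exp (real k) ^ n"
proof -
  define L where "L = Lg T powr (- real n - eps0)"
  define U where "U = Lg T powr C"
  define Z where "Z = 2 * (C + n + eps0) + n + 2"
  define W where "W = 3 + 2 * (n + eps0)"
  define N where "N = nat \<lfloor>T\<rfloor>"
  have kr: "real k \<ge> 1" using k by simp
  have ek: "exp (real k) \<ge> real k" using exp_ge_add_one_self[of "real k"] by linarith
  have ek1: "exp (real k) \<ge> 1" using kr by simp
  have LgT: "Lg T = exp (real k)" unfolding T_def by (rule Lg_Tk)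
  have Ld: "L = exp ((- real n - eps0) * real k)" unfolding L_def LgT by (simp add: powr_def)
  have Ud: "U = exp (C * real k)" unfolding U_def LgT by (simp add: powr_def)
  have ln2: "2/3 \<le> ln (2::real)" by (rule ln2_ge_two_thirds)
  have ln2p: "ln (2::real) > 0" by simp
  have A: "log 2 (U / L) + real n + 2 \<le> real k * Z"
  proof -
    have "log 2 (U / L) = (C + n + eps0) * real k / ln 2"
      unfolding Ld Ud log_def by (simp add: exp_diff[symmetric] algebra_simps)
    also have "\<dots> \<le> (C + n + eps0) * real k * 2"
    proof -
      have X0: "0 \<le> (C + n + eps0) * real k" using eps C by simp
      have "(C + n + eps0) * real k * 1 \<le> (C + n + eps0) * real k * (2 * ln 2)"
        using mult_left_mono[OF _ X0, of 1 "2 * ln 2"] ln2 by simp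
      then show ?thesis using ln2p by (simp add: divide_le_eq mult.assoc)
    qed
    finally have a1: "log 2 (U / L) \<le> (C + n + eps0) * real k * 2" .
    have a2: "1 * (real n + 2) \<le> real k * (real n + 2)" by (rule mult_right_mono[OF kr]) simp
    show ?thesis unfolding Z_def using a1 a2 by (simp add: algebra_simps)
  qed
  have TT: "T \<ge> 1" unfolding T_def by simp
  have N1: "N \<ge> 1" unfolding N_def using TT by linarith
  have NT: "real N \<le> T" unfolding N_def using TT by linarith
  have B: "max 0 (log 2 (real q / L)) + 1 \<le> exp (real k) * W" if q: "q \<in> {1..N}" for q
  proof -
    have q1: "real q \<ge> 1" using q by simp
    have "real q \<le> T" using q NT by simp
    then have "ln (real q) \<le> ln T" using q1 by (subst ln_le_cancel_iff) (auto simp: T_def)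
    then have lq: "ln (real q) \<le> exp (real k)" unfolding T_def by simp
    have lq0: "ln (real q) \<ge> 0" using q1 by simp
    have "log 2 (real q / L) = (ln (real q) + (n + eps0) * real k) / ln 2"
      unfolding Ld log_def using q1 by (simp add: ln_div algebra_simps)
    also have "\<dots> \<le> (exp (real k) + (n + eps0) * real k) * 2"
    proof -
      have nn: "0 \<le> ln (real q) + (n + eps0) * real k" using lq0 eps by simp
      have "(ln (real q) + (n + eps0) * real k) / ln 2 \<le> (ln (real q) + (n + eps0) * real k) * (3/2)"
        by (rule div_ln2[OF nn])
      also have "\<dots> \<le> (exp (real k) + (n + eps0) * real k) * 2"
      proof -
        have y: "0 \<le> (n + eps0) * real k" using eps by simp
        show ?thesis using lq lq0 y unfolding distrib_right by linarith
      qed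
      finally show ?thesis .
    qed
    finally have "log 2 (real q / L) \<le> (exp (real k) + (n + eps0) * real k) * 2" .
    moreover have "(n + eps0) * real k \<le> (n + eps0) * exp (real k)"
      using ek eps by (intro mult_left_mono) auto
    ultimately have l: "log 2 (real q / L) \<le> 2 * exp (real k) + 2 * ((n + eps0) * exp (real k))"
      by (simp add: algebra_simps)
    have eq: "exp (real k) * W = 3 * exp (real k) + 2 * ((n + eps0) * exp (real k))"
      by (simp add: W_def algebra_simps)
    have nn: "0 \<le> (n + eps0) * exp (real k)" using eps by simp
    have m1: "log 2 (real q / L) + 1 \<le> exp (real k) * W" using l nn ek1 unfolding eq by linarith
    have m2: "0 + 1 \<le> exp (real k) * W" using nn ek1 unfolding eq by linarith
    show ?thesis using m1 m2 by (simp add: max_def)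
  qed
  have "(\<Sum>q\<in>{1..N}. 8^n / real q * ((log 2 (U / L) + real n + 2) * (max 0 (log 2 (real q / L)) + 1)^(n-1)))
      \<le> (\<Sum>q\<in>{1..N}. 8^n / real q * (real k * Z * (exp (real k) * W)^(n-1)))"
  proof (rule sum_mono)
    fix q assume q: "q \<in> {1..N}"
    have "0 \<le> log 2 (U / L) + real n + 2"
    proof -
      have "U / L = exp ((C + n + eps0) * real k)" unfolding Ud Ld
        by (simp add: exp_diff[symmetric] algebra_simps)
      moreover have "exp ((C + n + eps0) * real k) \<ge> 1" using eps C by simp
      ultimately have "U / L \<ge> 1" by simp
      then show ?thesis by simp
    qed
    moreover have "(max 0 (log 2 (real q / L)) + 1)^(n-1) \<le> (exp (real k) * W)^(n-1)"
      using B[OF q] by (intro power_mono) auto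
    ultimately have "(log 2 (U / L) + real n + 2) * (max 0 (log 2 (real q / L)) + 1)^(n-1)
        \<le> (real k * Z) * (exp (real k) * W)^(n-1)"
      using A by (intro mult_mono) auto
    then show "8^n / real q * ((log 2 (U / L) + real n + 2) * (max 0 (log 2 (real q / L)) + 1)^(n-1))
        \<le> 8^n / real q * (real k * Z * (exp (real k) * W)^(n-1))"
      by (intro mult_left_mono) auto
  qed
  also have "\<dots> = 8^n * (real k * Z * (exp (real k) * W)^(n-1)) * (\<Sum>q\<in>{1..N}. 1 / real q)"
    by (simp add: sum_distrib_left sum_distrib_right)
  also have "\<dots> \<le> 8^n * (real k * Z * (exp (real k) * W)^(n-1)) * (2 * exp (real k))"
  proof (rule mult_left_mono)
    have "(\<Sum>q\<in>{1..N}. 1 / real q) \<le> 1 + ln (real N)" by (rule harm_bound[OF N1])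
    also have "ln (real N) \<le> exp (real k)"
    proof -
      have "ln (real N) \<le> ln T" using NT N1 by (subst ln_le_cancel_iff) (auto simp: T_def)
      then show ?thesis unfolding T_def by simp
    qed
    finally show "(\<Sum>q\<in>{1..N}. 1 / real q) \<le> 2 * exp (real k)" using ek1 by linarith
    show "0 \<le> 8^n * (real k * Z * (exp (real k) * W)^(n-1))"
      unfolding Z_def W_def using eps C by (intro mult_nonneg_nonneg zero_le_power) auto
  qed
  also have "\<dots> = D * real k * (exp (real k) ^ (n-1) * exp (real k))"
  proof -
    have "D = 8^n * 2 * Z * W^(n-1)" unfolding D_def Z_def W_def by simp
    then show ?thesis by (simp add: power_mult_distrib ac_simps)
  qed
  also have "exp (real k) ^ (n-1) * exp (real k) = exp (real k) ^ n"
    using n by (cases n) auto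
  finally show ?thesis unfolding L_def U_def N_def by simp
qed


lemma S_nonneg: "eps0 > 0 \<Longrightarrow> 0 \<le> S2star eps0 C (\<alpha>::real^'n::finite) T"
proof -
  assume eps: "eps0 > 0"
  have L: "0 < Lg T powr (- real CARD('n) - eps0)" using Lg_ge1[of T] by simp
  show ?thesis unfolding S2star_def
  proof (rule sum_nonneg)
    fix q assume "q \<in> {q. 0 < q \<and> real q \<le> T \<and> Lg T powr (- real CARD('n) - eps0) < qprod \<alpha> q \<and> qprod \<alpha> q \<le> Lg T powr C}"
    then have "Lg T powr (- real CARD('n) - eps0) < qprod \<alpha> q" by auto
    then have "0 < qprod \<alpha> q" using L by linarith
    then show "0 \<le> 1 / qprod \<alpha> q" by simp
  qed
qed

lemma S_mono_T:
  assumes eps: "eps0 > 0" and C: "C \<ge> 0" and TT: "T \<le> T'"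
  shows "S2star eps0 C (\<alpha>::real^'n::finite) T \<le> S2star eps0 C \<alpha> T'"
proof -
  let ?a = "- real CARD('n) - eps0"
  have Lg: "Lg T \<le> Lg T'" by (rule Lg_mono[OF TT])
  have L: "Lg T' powr ?a \<le> Lg T powr ?a"
    using Lg_ge1[of T] Lg eps by (intro powr_mono2') auto
  have U: "Lg T powr C \<le> Lg T' powr C"
    using Lg_ge1[of T] Lg C by (intro powr_mono2) auto
  have L0: "0 < Lg T' powr ?a" using Lg_ge1[of T'] by simp
  let ?A = "{q. 0 < q \<and> real q \<le> T \<and> Lg T powr ?a < qprod \<alpha> q \<and> qprod \<alpha> q \<le> Lg T powr C}"
  let ?B = "{q. 0 < q \<and> real q \<le> T' \<and> Lg T' powr ?a < qprod \<alpha> q \<and> qprod \<alpha> q \<le> Lg T' powr C}"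
  have sub: "?A \<subseteq> ?B" using TT L U by auto
  have fin: "finite ?B"
    by (rule finite_subset[of _ "{..nat \<lfloor>T'\<rfloor>}"]) (auto simp: le_nat_floor)
  have "(\<Sum>q\<in>?A. 1 / qprod \<alpha> q) \<le> (\<Sum>q\<in>?B. 1 / qprod \<alpha> q)"
  proof (rule sum_mono2[OF fin sub])
    fix q assume "q \<in> ?B - ?A"
    then have "Lg T' powr ?a < qprod \<alpha> q" by blast
    then have "0 < qprod \<alpha> q" using L0 by linarith
    then show "0 \<le> 1 / qprod \<alpha> q" by simp
  qed
  then show ?thesis unfolding S2star_def .
qed

lemma S_mono_C:
  assumes CC: "C \<le> C'"
  shows "S2star eps0 C (\<alpha>::real^'n::finite) T \<le> S2star eps0 C' \<alpha> T"
proof -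
  let ?a = "- real CARD('n) - eps0"
  have U: "Lg T powr C \<le> Lg T powr C'" using Lg_ge1[of T] CC by (intro powr_mono) auto
  have L0: "0 < Lg T powr ?a" using Lg_ge1[of T] by simp
  let ?A = "{q. 0 < q \<and> real q \<le> T \<and> Lg T powr ?a < qprod \<alpha> q \<and> qprod \<alpha> q \<le> Lg T powr C}"
  let ?B = "{q. 0 < q \<and> real q \<le> T \<and> Lg T powr ?a < qprod \<alpha> q \<and> qprod \<alpha> q \<le> Lg T powr C'}"
  have sub: "?A \<subseteq> ?B" using U by auto
  have fin: "finite ?B"
    by (rule finite_subset[of _ "{..nat \<lfloor>T\<rfloor>}"]) (auto simp: le_nat_floor)
  have "(\<Sum>q\<in>?A. 1 / qprod \<alpha> q) \<le> (\<Sum>q\<in>?B. 1 / qprod \<alpha> q)"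
  proof (rule sum_mono2[OF fin sub])
    fix q assume "q \<in> ?B - ?A"
    then have "Lg T powr ?a < qprod \<alpha> q" by blast
    then have "0 < qprod \<alpha> q" using L0 by linarith
    then show "0 \<le> 1 / qprod \<alpha> q" by simp
  qed
  then show ?thesis unfolding S2star_def .
qed


lemma AE_fixedC:
  fixes eps0 C :: real
  assumes eps: "eps0 > 0" and C: "C \<ge> 0"
  shows "AE \<alpha> in (lborel :: (real^'n::finite) measure). (\<forall>i. 0 \<le> \<alpha>$i \<and> \<alpha>$i \<le> 1) \<longrightarrow>
     (\<exists>K\<ge>0. \<forall>k\<ge>1. S2star eps0 C \<alpha> (exp (exp (real k))) \<le> K * real k^3 * exp (real k)^CARD('n))"
proof -
  define n where "n = CARD('n)"
  have n1: "n \<ge> 1" unfolding n_def by (simp add: Suc_leI)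
  define D where "D = 8^n * 2 * (2 * (C + n + eps0) + n + 2) * (3 + 2 * (n + eps0))^(n-1)"
  have Dpos: "D > 0" unfolding D_def using eps C
    by (intro mult_pos_pos zero_less_power) auto
  define Tk where "Tk = (\<lambda>k::nat. exp (exp (real k)))"
  define B where "B = (\<lambda>j::nat. D * real (Suc j)^3 * exp (real (Suc j))^n)"
  have Bpos: "B j > 0" for j unfolding B_def using Dpos by simp
  define G where "G = (\<lambda>j. Gf n eps0 C (Tk (Suc j)) :: real^'n \<Rightarrow> ennreal)"
  have Gm[measurable]: "G j \<in> borel_measurable lborel" for j unfolding G_def n_def by (rule G_meas)
  define A where "A = (\<lambda>j. {\<alpha> \<in> space lborel. ennreal (B j) < G j \<alpha>})"
  have Ameas: "A j \<in> sets lborel" for j unfolding A_def by measurable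
  have int: "(\<integral>\<^sup>+\<alpha>. G j \<alpha> \<partial>lborel) \<le> ennreal (D * real (Suc j) * exp (real (Suc j))^n)" for j
  proof -
    have "(\<integral>\<^sup>+\<alpha>. G j \<alpha> \<partial>lborel) \<le> ennreal (\<Sum>q\<in>{1..nat \<lfloor>Tk (Suc j)\<rfloor>}. 8^n / real q *
      ((log 2 (Lg (Tk (Suc j)) powr C / Lg (Tk (Suc j)) powr (- real n - eps0)) + real n + 2) *
       (max 0 (log 2 (real q / Lg (Tk (Suc j)) powr (- real n - eps0))) + 1)^(n-1)))"
      unfolding G_def n_def by (rule G_int[OF eps C])
    also have "\<dots> \<le> ennreal (D * real (Suc j) * exp (real (Suc j))^n)"
      unfolding Tk_def D_def by (intro ennreal_leI real_bound[OF n1 eps C]) simp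
    finally show ?thesis .
  qed
  have Am: "emeasure lborel (A j) \<le> ennreal (1 / real (Suc j)^2)" for j
  proof -
    let ?c = "ennreal (1 / B j)"
    have sub: "A j \<subseteq> {\<alpha> \<in> space lborel. 1 \<le> ?c * G j \<alpha>}"
    proof
      fix \<alpha> assume "\<alpha> \<in> A j"
      then have a: "ennreal (B j) < G j \<alpha>" and sp: "\<alpha> \<in> space lborel" unfolding A_def by auto
      have "1 = ?c * ennreal (B j)" using Bpos[of j] by (simp add: ennreal_mult'[symmetric])
      also have "\<dots> \<le> ?c * G j \<alpha>" using a by (intro mult_left_mono) auto
      finally show "\<alpha> \<in> {\<alpha> \<in> space lborel. 1 \<le> ?c * G j \<alpha>}" using sp by simp
    qed
    have "emeasure lborel (A j) \<le> emeasure lborel {\<alpha> \<in> space lborel. 1 \<le> ?c * G j \<alpha>}"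
      by (rule emeasure_mono[OF sub]) measurable
    also have "\<dots> \<le> ?c * (\<integral>\<^sup>+ \<alpha>. G j \<alpha> * indicator (space lborel) \<alpha> \<partial>lborel)"
      by (rule nn_integral_Markov_inequality) auto
    also have "(\<integral>\<^sup>+ \<alpha>. G j \<alpha> * indicator (space lborel) \<alpha> \<partial>lborel) = (\<integral>\<^sup>+ \<alpha>. G j \<alpha> \<partial>lborel)"
      by (rule nn_integral_cong) simp
    also have "?c * \<dots> \<le> ?c * ennreal (D * real (Suc j) * exp (real (Suc j))^n)"
      by (intro mult_left_mono int) auto
    also have "\<dots> = ennreal (1 / B j * (D * real (Suc j) * exp (real (Suc j))^n))"
      using Bpos[of j] by (simp add: ennreal_mult'[symmetric])
    also have "1 / B j * (D * real (Suc j) * exp (real (Suc j))^n) = 1 / real (Suc j)^2"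
    proof -
      have h: "\<And>D x e::real. D > 0 \<Longrightarrow> x > 0 \<Longrightarrow> e > 0 \<Longrightarrow> 1 / (D * x^3 * e) * (D * x * e) = 1 / x^2"
        by (simp add: field_simps power2_eq_square power3_eq_cube)
      show ?thesis unfolding B_def by (rule h[OF Dpos]) auto
    qed
    finally show ?thesis .
  qed
  have Afin: "emeasure lborel (A j) < \<infinity>" for j
    using Am[of j] by (simp add: le_less_trans)
  have mle: "measure lborel (A j) \<le> 1 / real (Suc j)^2" for j
    using Am[of j] Afin[of j] by (simp add: emeasure_eq_ennreal_measure ennreal_le_iff less_top)
  have summ: "summable (\<lambda>j. measure lborel (A j))"
  proof (rule summable_comparison_test'[where N=0])
    have "summable (\<lambda>j. inverse (real j ^ 2))" by (rule inverse_power_summable) simp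
    then have "summable (\<lambda>j. inverse (real (Suc j) ^ 2))" by (subst summable_Suc_iff)
    then show "summable (\<lambda>j. 1 / real (Suc j)^2)" by (simp add: inverse_eq_divide)
    show "norm (measure lborel (A j)) \<le> 1 / real (Suc j)^2" for j using mle[of j] by simp
  qed
  have BC: "AE \<alpha> in lborel. eventually (\<lambda>j. \<alpha> \<in> space lborel - A j) sequentially"
    by (rule borel_cantelli_AE1[OF Ameas Afin summ])
  show ?thesis
  proof (rule AE_mp[OF BC], intro AE_I2 impI)
    fix \<alpha> :: "real^'n"
    assume ev: "eventually (\<lambda>j. \<alpha> \<in> space lborel - A j) sequentially"
      and cube: "\<forall>i. 0 \<le> \<alpha>$i \<and> \<alpha>$i \<le> 1"
    obtain J where J: "\<And>j. j \<ge> J \<Longrightarrow> \<alpha> \<in> space lborel - A j"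
      using ev unfolding eventually_sequentially by blast
    have Sle: "S2star eps0 C \<alpha> (Tk (Suc j)) \<le> B j" if "j \<ge> J" for j
    proof -
      have "\<not> ennreal (B j) < G j \<alpha>" using J[OF that] unfolding A_def by auto
      then have "G j \<alpha> \<le> ennreal (B j)" by simp
      moreover have "ennreal (S2star eps0 C \<alpha> (Tk (Suc j))) \<le> G j \<alpha>"
        unfolding G_def n_def by (rule S_le_G[OF cube])
      ultimately have "ennreal (S2star eps0 C \<alpha> (Tk (Suc j))) \<le> ennreal (B j)" by (rule order_trans[rotated])
      then show ?thesis using Bpos[of j] by (simp add: ennreal_le_iff)
    qed
    define K where "K = D + (\<Sum>j<J. S2star eps0 C \<alpha> (Tk (Suc j)))"
    have Snn: "0 \<le> S2star eps0 C \<alpha> T" for T by (rule S_nonneg[OF eps])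
    have K0: "K \<ge> 0" unfolding K_def using Dpos Snn by (simp add: sum_nonneg add_nonneg_nonneg less_imp_le)
    have DK: "D \<le> K" unfolding K_def using Snn by (simp add: sum_nonneg)
    have "\<forall>k\<ge>1. S2star eps0 C \<alpha> (exp (exp (real k))) \<le> K * real k^3 * exp (real k)^CARD('n)"
    proof (intro allI impI)
      fix k :: nat assume k1: "k \<ge> 1"
      then obtain j where kj: "k = Suc j" by (cases k) auto
      define F where "F = real k^3 * exp (real k)^n"
      have F1: "F \<ge> 1" unfolding F_def using k1
      proof -
        have a: "1 \<le> real k ^ 3" using k1 by (intro one_le_power) simp
        have b: "1 \<le> exp (real k) ^ n" by (intro one_le_power) simp
        have "1 * 1 \<le> real k ^ 3 * exp (real k) ^ n" using a b by (intro mult_mono) auto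
        then show "1 \<le> real k ^ 3 * exp (real k) ^ n" by simp
      qed
      have "S2star eps0 C \<alpha> (Tk (Suc j)) \<le> K * F"
      proof (cases "j \<ge> J")
        case True
        have "S2star eps0 C \<alpha> (Tk (Suc j)) \<le> B j" by (rule Sle[OF True])
        also have "B j = D * F" unfolding B_def F_def kj by simp
        also have "\<dots> \<le> K * F" using DK F1 by (intro mult_right_mono) auto
        finally show ?thesis .
      next
        case False
        then have "j \<in> {..<J}" by simp
        then have "S2star eps0 C \<alpha> (Tk (Suc j)) \<le> (\<Sum>j<J. S2star eps0 C \<alpha> (Tk (Suc j)))"
          by (rule member_le_sum) (use Snn in auto)
        also have "\<dots> \<le> K" unfolding K_def using Dpos by simp
        also have "\<dots> \<le> K * F" using K0 F1 by (simp add: mult_le_cancel_left1)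
        finally show ?thesis .
      qed
      then show "S2star eps0 C \<alpha> (exp (exp (real k))) \<le> K * real k^3 * exp (real k)^CARD('n)"
        unfolding Tk_def F_def n_def kj by (simp add: mult.assoc)
    qed
    then show "\<exists>K\<ge>0. \<forall>k\<ge>1. S2star eps0 C \<alpha> (exp (exp (real k))) \<le> K * real k^3 * exp (real k)^CARD('n)"
      using K0 by blast
  qed
qed


lemma final_step:
  fixes \<alpha> :: "real^'n::finite"
  assumes eps: "eps0 > 0" and C: "C \<ge> 0" and eta: "\<eta> > 0" and K0: "K \<ge> 0"
    and H: "\<forall>k::nat\<ge>1. S2star eps0 C \<alpha> (exp (exp (real k))) \<le> K * real k^3 * exp (real k)^CARD('n)"
  shows "\<exists>K'. \<forall>T\<ge>1. S2star eps0 C \<alpha> T \<le> K' * Lg (Lg T) powr (2 + real CARD('n) + \<eta>) * Lg T ^ CARD('n)"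
proof (intro exI allI impI)
  define n where "n = CARD('n)"
  fix T :: real assume T1: "T \<ge> 1"
  define K' where "K' = 8 * K * exp 1 ^ n"
  have K'0: "K' \<ge> 0" unfolding K'_def using K0 by simp
  have RHS0: "0 \<le> K' * Lg (Lg T) powr (2 + real n + \<eta>) * Lg T ^ n"
    using K'0 Lg_ge1[of T] by simp
  show "S2star eps0 C \<alpha> T \<le> K' * Lg (Lg T) powr (2 + real CARD('n) + \<eta>) * Lg T ^ CARD('n)"
  proof (cases "T \<le> exp 1")
    case True
    have L1: "Lg T = 1" unfolding Lg_def using True by (simp add: max_def)
    have E: "{q. 0 < q \<and> real q \<le> T \<and> 1 < qprod \<alpha> q \<and> qprod \<alpha> q \<le> 1} = {}" by auto
    have "S2star eps0 C \<alpha> T = 0" unfolding S2star_def L1 powr_one_eq_one E by simp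
    then show ?thesis using RHS0 unfolding n_def by simp
  next
    case False
    then have Te: "T > exp 1" by simp
    have Tpos: "T > 0" using T1 by simp
    have lT: "ln T > 1" using Te Tpos by (metis exp_gt_zero ln_exp ln_less_cancel_iff)
    have LgT: "Lg T = ln T" unfolding Lg_def using Te by (simp add: max_def)
    define k where "k = nat \<lceil>ln (ln T)\<rceil>"
    have llT: "ln (ln T) > 0" using lT by simp
    have k1: "k \<ge> 1" unfolding k_def using llT by linarith
    have kge: "real k \<ge> ln (ln T)" unfolding k_def by linarith
    have kle: "real k \<le> ln (ln T) + 1" unfolding k_def using llT by linarith
    have "ln T \<le> exp (real k)" using kge lT by (metis exp_le_cancel_iff exp_ln less_trans zero_less_one)
    then have Tk: "T \<le> exp (exp (real k))" using Tpos by (metis exp_le_cancel_iff exp_ln)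
    have "S2star eps0 C \<alpha> T \<le> S2star eps0 C \<alpha> (exp (exp (real k)))"
      by (rule S_mono_T[OF eps C Tk])
    also have "\<dots> \<le> K * real k^3 * exp (real k)^n" using H k1 unfolding n_def by blast
    also have "\<dots> \<le> K * (8 * Lg (Lg T) powr (2 + real n + \<eta>)) * (exp 1 ^ n * Lg T ^ n)"
    proof -
      have LL1: "Lg (Lg T) \<ge> 1" by (rule Lg_ge1)
      have "ln (ln T) \<le> Lg (Lg T)" unfolding LgT Lg_def using lT Te
        by (subst ln_le_cancel_iff) (auto simp: max_def)
      then have "real k \<le> 2 * Lg (Lg T)" using kle LL1 by linarith
      then have "real k ^ 3 \<le> (2 * Lg (Lg T)) ^ 3" by (intro power_mono) auto
      also have "\<dots> = 8 * Lg (Lg T) ^ 3" by (simp add: power_mult_distrib)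
      also have "Lg (Lg T) ^ 3 = Lg (Lg T) powr 3" using LL1 by (simp add: powr_realpow)
      also have "\<dots> \<le> Lg (Lg T) powr (2 + real n + \<eta>)"
      proof (rule powr_mono[OF _ LL1])
        have "n \<ge> 1" unfolding n_def by (simp add: Suc_leI)
        then show "3 \<le> 2 + real n + \<eta>" using eta by simp
      qed
      finally have A: "real k ^ 3 \<le> 8 * Lg (Lg T) powr (2 + real n + \<eta>)" by simp
      have "exp (real k) \<le> exp (ln (ln T) + 1)" using kle by simp
      also have "\<dots> = exp 1 * Lg T" using lT unfolding LgT by (simp add: exp_add)
      finally have "exp (real k) ^ n \<le> (exp 1 * Lg T) ^ n" by (intro power_mono) auto
      then have B: "exp (real k) ^ n \<le> exp 1 ^ n * Lg T ^ n" by (simp add: power_mult_distrib)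
      have "K * real k^3 * exp (real k)^n \<le> K * (8 * Lg (Lg T) powr (2 + real n + \<eta>)) * exp (real k)^n"
        using A K0 by (intro mult_right_mono mult_left_mono) auto
      also have "\<dots> \<le> K * (8 * Lg (Lg T) powr (2 + real n + \<eta>)) * (exp 1 ^ n * Lg T ^ n)"
        using B K0 by (intro mult_left_mono) auto
      finally show ?thesis .
    qed
    also have "\<dots> = K' * Lg (Lg T) powr (2 + real n + \<eta>) * Lg T ^ n"
      unfolding K'_def by (simp add: ac_simps)
    finally show ?thesis unfolding n_def .
  qed
qed

theorem mainTheorem12:
  fixes eps0 :: real
  assumes "eps0 > 0"
  shows "AE \<alpha> in (lborel :: (real^'n) measure).
           (\<forall>i. 0 \<le> \<alpha> $ i \<and> \<alpha> $ i \<le> 1) \<longrightarrow>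
           (\<forall>C \<ge> 1. \<forall>\<eta> > 0. \<exists>K. \<forall>T \<ge> 1.
              S2star eps0 C \<alpha> T \<le>
                K * Lg (Lg T) powr (2 + real CARD('n) + \<eta>) * Lg T ^ CARD('n))"
proof -
  have "AE \<alpha> in (lborel :: (real^'n) measure). \<forall>m::nat. (\<forall>i. 0 \<le> \<alpha>$i \<and> \<alpha>$i \<le> 1) \<longrightarrow>
     (\<exists>K\<ge>0. \<forall>k\<ge>1. S2star eps0 (real m) \<alpha> (exp (exp (real k))) \<le> K * real k^3 * exp (real k)^CARD('n))"
  proof (subst AE_all_countable, intro allI)
    fix m :: nat
    show "AE \<alpha> in (lborel :: (real^'n) measure). (\<forall>i. 0 \<le> \<alpha>$i \<and> \<alpha>$i \<le> 1) \<longrightarrow>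
     (\<exists>K\<ge>0. \<forall>k\<ge>1. S2star eps0 (real m) \<alpha> (exp (exp (real k))) \<le> K * real k^3 * exp (real k)^CARD('n))"
      by (rule AE_fixedC[OF assms]) simp
  qed
  then show ?thesis
  proof (rule AE_mp, intro AE_I2 impI allI)
    fix \<alpha> :: "real^'n" and C \<eta> :: real
    assume H: "\<forall>m::nat. (\<forall>i. 0 \<le> \<alpha>$i \<and> \<alpha>$i \<le> 1) \<longrightarrow>
     (\<exists>K\<ge>0. \<forall>k\<ge>1. S2star eps0 (real m) \<alpha> (exp (exp (real k))) \<le> K * real k^3 * exp (real k)^CARD('n))"
      and cube: "\<forall>i. 0 \<le> \<alpha> $ i \<and> \<alpha> $ i \<le> 1" and C: "1 \<le> C" and eta: "0 < \<eta>"
    define m where "m = nat \<lceil>C\<rceil>"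
    have Cm: "C \<le> real m" unfolding m_def by linarith
    obtain K where K0: "K \<ge> 0" and HK: "\<forall>k::nat\<ge>1. S2star eps0 (real m) \<alpha> (exp (exp (real k))) \<le> K * real k^3 * exp (real k)^CARD('n)"
      using H cube by blast
    have HC: "\<forall>k::nat\<ge>1. S2star eps0 C \<alpha> (exp (exp (real k))) \<le> K * real k^3 * exp (real k)^CARD('n)"
      using HK S_mono_C[OF Cm] by (meson order_trans)
    show "\<exists>K. \<forall>T\<ge>1. S2star eps0 C \<alpha> T \<le> K * Lg (Lg T) powr (2 + real CARD('n) + \<eta>) * Lg T ^ CARD('n)"
      by (rule final_step[OF assms _ eta K0 HC]) (use C in simp)
  qed
qed

end
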